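(* Let $X$ be a rational ruled surface, let $c_1=a(\sigma+f)$ with $a\in\{0,1\}$, and let $c_2$ be an integer with $3c_2-c_1^2>0$. Let $F$ be a divisor on $X$ and $\zeta=3F-c_1$, and suppose there exist ample divisors $L_1,L_2$ with $\zeta\cdot L_1<0<\zeta\cdot L_2$ and that $-4(3c_2-c_1^2)\le\zeta^2<0$. Define $$d_\zeta(c_1,c_2)=-\frac{3c_2-c_1^2}{3}+2+\frac{\zeta^2}{6}+\frac{K_X\cdot\zeta}{2}.$$ Then: (i) if $a=0$, then $d_\zeta(c_1,c_2)<0$; (ii) if $a=1$, then $d_\zeta(c_1,c_2)\le 0$, with equality if and only if either $\zeta\equiv 2\sigma-(3c_2-2)f$, or $e=0$ and $\zeta\equiv-(3c_2-2)\sigma+2f$.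
   Context: $X$ is a rational ruled surface with ruling $\pi:X\to\mathbb{P}^1$; $f$ is a fiber of $\pi$ and $\sigma$ is a section of $\pi$ with $\sigma^2$ minimal; $e=-\sigma^2\ge 0$. The Picard group of $X$ is generated by $\sigma$ and $f$, with $\sigma^2=-e$, $\sigma\cdot f=1$, $f^2=0$, and the canonical divisor is $K_X=-2\sigma-(2+e)f$. $\equiv$ denotes numerical equivalence. *)

theory Defs
  imports Complex_Main
begin

text \<open>Model of the numerical N^1 of the rational ruled surface X = F_e (e = -sigma^2 >= 0).
  A divisor class is given by its coordinates (x, y) in the basis (sigma, f), i.e. x sigma + y f.
  Pic X = Z sigma + Z f and the intersection form is nondegenerate, so numerical
  equivalence of divisors is equality of these coordinate pairs.\<close>

type_synonym divcls = "int \<times> int"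

definition sig :: divcls where "sig = (1, 0)"
definition fib :: divcls where "fib = (0, 1)"

definition dadd :: "divcls \<Rightarrow> divcls \<Rightarrow> divcls" where
  "dadd D E = (fst D + fst E, snd D + snd E)"
definition dsmul :: "int \<Rightarrow> divcls \<Rightarrow> divcls" where
  "dsmul k D = (k * fst D, k * snd D)"
definition dminus :: "divcls \<Rightarrow> divcls \<Rightarrow> divcls" where
  "dminus D E = (fst D - fst E, snd D - snd E)"

definition inter :: "nat \<Rightarrow> divcls \<Rightarrow> divcls \<Rightarrow> int" where
  "inter e D E = - int e * fst D * fst E + fst D * snd E + snd D * fst E"

definition canon :: "nat \<Rightarrow> divcls" where
  "canon e = (-2, - (2 + int e))"

text \<open>Ampleness on F_e (e >= 0), Hartshorne V.2.18: x sigma + y f is ample iff x > 0 and y > x e.\<close>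
definition ample :: "nat \<Rightarrow> divcls \<Rightarrow> bool" where
  "ample e D \<longleftrightarrow> fst D > 0 \<and> snd D > fst D * int e"

definition d_zeta :: "nat \<Rightarrow> divcls \<Rightarrow> int \<Rightarrow> divcls \<Rightarrow> real" where
  "d_zeta e c1 c2 \<zeta> =
     - real_of_int (3 * c2 - inter e c1 c1) / 3 + 2
     + real_of_int (inter e \<zeta> \<zeta>) / 6 + real_of_int (inter e (canon e) \<zeta>) / 2"

end

theory Submission
  imports Defs
begin

lemma signs:
  fixes x y E p q :: int
  assumes "p > 0" "q > p * E" "x * (q - E*p) + y * p < 0"
  shows "x < 0 \<or> y < 0"
proof (rule ccontr)
  assume "\<not> (x < 0 \<or> y < 0)"
  hence "x \<ge> 0" "y \<ge> 0" by auto
  moreover have "q - E*p \<ge> 0" using assms by (simp add: mult.commute)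
  ultimately have "x * (q - E*p) \<ge> 0" "y * p \<ge> 0" using assms by auto
  thus False using assms by linarith
qed

lemma signs2:
  fixes x y E p q :: int
  assumes "p > 0" "q > p * E" "x * (q - E*p) + y * p > 0"
  shows "x > 0 \<or> y > 0"
proof -
  have "(-x) * (q - E*p) + (-y) * p < 0" using assms by (simp add: algebra_simps)
  from signs[OF assms(1,2) this] show ?thesis by auto
qed

theorem lemma2p6:
  fixes e :: nat and a :: int and c2 :: int and F c1 \<zeta> :: divcls
  assumes ha: "a \<in> {0, 1}"
    and hc1: "c1 = dsmul a (dadd sig fib)"
    and hdisc: "3 * c2 - inter e c1 c1 > 0"
    and hzeta: "\<zeta> = dminus (dsmul 3 F) c1"
    and hwall: "\<exists>L1 L2. ample e L1 \<and> ample e L2 \<and> inter e \<zeta> L1 < 0 \<and> 0 < inter e \<zeta> L2"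
    and hlow: "- 4 * (3 * c2 - inter e c1 c1) \<le> inter e \<zeta> \<zeta>"
    and hneg: "inter e \<zeta> \<zeta> < 0"
  shows "(a = 0 \<longrightarrow> d_zeta e c1 c2 \<zeta> < 0)
       \<and> (a = 1 \<longrightarrow> d_zeta e c1 c2 \<zeta> \<le> 0
            \<and> (d_zeta e c1 c2 \<zeta> = 0 \<longleftrightarrow>
                 (\<zeta> = dminus (dsmul 2 sig) (dsmul (3 * c2 - 2) fib)
                  \<or> (e = 0 \<and> \<zeta> = dadd (dsmul (- (3 * c2 - 2)) sig) (dsmul 2 fib)))))"
proof -
  define E where "E = int e"
  have E0: "E \<ge> 0" unfolding E_def by simp
  obtain x y where xy: "\<zeta> = (x, y)" by (cases \<zeta>)
  obtain F1 F2 where FF: "F = (F1, F2)" by (cases F)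
  have c1v: "c1 = (a, a)" using hc1 by (simp add: dsmul_def dadd_def sig_def fib_def)
  have hx: "x = 3*F1 - a" and hy: "y = 3*F2 - a"
    using hzeta xy FF c1v by (auto simp: dminus_def dsmul_def)
  define D where "D = 3*c2 - a*a*(2 - E)"
  have DD: "inter e c1 c1 = a*a*(2-E)" using c1v unfolding inter_def E_def by (simp add: algebra_simps)
  have Z2: "inter e \<zeta> \<zeta> = - E*x*x + 2*x*y" using xy unfolding inter_def E_def by simp
  have KZ: "inter e (canon e) \<zeta> = E*x - 2*y - 2*x" using xy unfolding inter_def canon_def E_def
    by (simp add: algebra_simps)
  define T where "T = -2*D + 12 + (- E*x*x + 2*x*y) + 3*(E*x - 2*y - 2*x)"
  have dT: "d_zeta e c1 c2 \<zeta> = real_of_int T / 6"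
    unfolding d_zeta_def T_def D_def DD Z2 KZ by (simp add: field_simps)
  have low: "-4*D \<le> - E*x*x + 2*x*y" using hlow Z2 DD D_def by simp
  obtain L1 L2 where L: "ample e L1" "ample e L2" "inter e \<zeta> L1 < 0" "0 < inter e \<zeta> L2"
    using hwall by blast
  obtain p1 q1 where P1: "L1 = (p1, q1)" by (cases L1)
  obtain p2 q2 where P2: "L2 = (p2, q2)" by (cases L2)
  have "x < 0 \<or> y < 0"
    apply (rule signs[where p=p1 and q=q1 and E=E])
    using L(1,3) xy P1 unfolding ample_def inter_def E_def by (simp_all add: algebra_simps)
  moreover have "x > 0 \<or> y > 0"
    apply (rule signs2[where p=p2 and q=q2 and E=E])
    using L(2,4) xy P2 unfolding ample_def inter_def E_def by (simp_all add: algebra_simps)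
  ultimately have sg: "(x > 0 \<and> y < 0) \<or> (x < 0 \<and> y > 0)" by auto
  define Z where "Z = - E*x*x + 2*x*y"
  define K where "K = E*x - 2*y - 2*x"
  define G where "G = 8 + Z + 2*K"
  have T2: "2*T = 3*G - (Z + 4*D)" unfolding T_def G_def Z_def K_def by (simp add: algebra_simps)
  have low': "Z + 4*D \<ge> 0" using low unfolding Z_def by linarith
  have id1: "G = -((x-2)*(E*x - 2*y + 4))"
    unfolding G_def Z_def K_def by (simp add: algebra_simps)
  have id2: "G = (x-2)*(-E*x + 2*y - 4)"
    unfolding G_def Z_def K_def by (simp add: algebra_simps)
  have Ex1: "x > 0 \<Longrightarrow> E*x \<ge> 0" using E0 by simp
  have Ex2: "x < 0 \<Longrightarrow> E*x \<le> 0" using E0 by (simp add: mult_nonneg_nonpos)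
  have dz: "d_zeta e c1 c2 \<zeta> = 0 \<longleftrightarrow> T = 0" unfolding dT by simp
  have dl: "d_zeta e c1 c2 \<zeta> < 0 \<longleftrightarrow> T < 0" unfolding dT by simp
  have dle: "d_zeta e c1 c2 \<zeta> \<le> 0 \<longleftrightarrow> T \<le> 0" unfolding dT by simp
  have A0: "T < 0" if a0: "a = 0"
  proof -
    have "G < 0"
      using sg
    proof
      assume h: "x > 0 \<and> y < 0"
      hence "x \<ge> 3" using hx a0 by presburger
      moreover have "E*x - 2*y + 4 > 0" using h Ex1 by linarith
      ultimately have "(x-2)*(E*x - 2*y + 4) > 0" by simp
      thus "G < 0" using id1 by linarith
    next
      assume h: "x < 0 \<and> y > 0"
      hence "x \<le> -3" "y \<ge> 3" using hx hy a0 by presburger+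
      moreover have "-E*x + 2*y - 4 > 0" using h Ex2 \<open>y \<ge> 3\<close> by linarith
      ultimately have "(x-2)*(-E*x + 2*y - 4) < 0" by (simp add: mult_neg_pos)
      thus "G < 0" using id2 by linarith
    qed
    thus ?thesis using T2 low' by linarith
  qed
  have A1: "T \<le> 0 \<and> (T = 0 \<longleftrightarrow> (\<zeta> = dminus (dsmul 2 sig) (dsmul (3 * c2 - 2) fib)
                  \<or> (e = 0 \<and> \<zeta> = dadd (dsmul (- (3 * c2 - 2)) sig) (dsmul 2 fib))))"
    if a1: "a = 1"
  proof -
    have Dv: "D = 3*c2 - 2 + E" unfolding D_def a1 by simp
    have t1: "dminus (dsmul 2 sig) (dsmul (3 * c2 - 2) fib) = (2, -(3*c2-2))"
      by (simp add: dminus_def dsmul_def sig_def fib_def)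
    have t2: "dadd (dsmul (- (3 * c2 - 2)) sig) (dsmul 2 fib) = (-(3*c2-2), 2)"
      by (simp add: dadd_def dsmul_def sig_def fib_def)
    have E0iff: "e = 0 \<longleftrightarrow> E = 0" unfolding E_def by simp
    have GT: "T = 0 \<longleftrightarrow> G = 0 \<and> Z + 4*D = 0" and Gle: "G \<le> 0"
      and Gz: "G = 0 \<longleftrightarrow> (x = 2 \<or> (E = 0 \<and> y = 2 \<and> x < 0))"
    proof -
      show "G \<le> 0" and Gz: "G = 0 \<longleftrightarrow> (x = 2 \<or> (E = 0 \<and> y = 2 \<and> x < 0))"
        using sg
      proof (atomize (full), elim disjE)
        assume h: "x > 0 \<and> y < 0"
        hence x2: "x \<ge> 2" using hx a1 by presburger
        have p: "E*x - 2*y + 4 > 0" using h Ex1 by linarith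
        have "(x-2)*(E*x - 2*y + 4) \<ge> 0" using x2 p by simp
        moreover have "(x-2)*(E*x - 2*y + 4) = 0 \<longleftrightarrow> x = 2" using p by simp
        ultimately show "G \<le> 0 \<and> (G = 0 \<longleftrightarrow> (x = 2 \<or> (E = 0 \<and> y = 2 \<and> x < 0)))"
          using id1 h by auto
      next
        assume h: "x < 0 \<and> y > 0"
        hence y2: "y \<ge> 2" using hy a1 by presburger
        have p: "-E*x + 2*y - 4 \<ge> 0" using h Ex2 y2 by linarith
        have "(x-2)*(-E*x + 2*y - 4) \<le> 0" using h p by (simp add: mult_nonpos_nonneg)
        moreover have "(x-2)*(-E*x + 2*y - 4) = 0 \<longleftrightarrow> -E*x + 2*y - 4 = 0" using h by simp
        moreover have "-E*x + 2*y - 4 = 0 \<longleftrightarrow> E = 0 \<and> y = 2"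
        proof
          assume "-E*x + 2*y - 4 = 0"
          moreover have "-E*x \<ge> 0" using Ex2 h by simp
          ultimately have "E*x = 0" "y = 2" using y2 by linarith+
          thus "E = 0 \<and> y = 2" using h by simp
        qed simp
        ultimately show "G \<le> 0 \<and> (G = 0 \<longleftrightarrow> (x = 2 \<or> (E = 0 \<and> y = 2 \<and> x < 0)))"
          using id2 h by auto
      qed
      then show "T = 0 \<longleftrightarrow> G = 0 \<and> Z + 4*D = 0" using T2 low' by linarith
    qed
    have "T \<le> 0" using T2 low' Gle by linarith
    moreover have "T = 0 \<longleftrightarrow> (\<zeta> = (2, -(3*c2-2)) \<or> (E = 0 \<and> \<zeta> = (-(3*c2-2), 2)))"
    proof
      assume "T = 0"
      hence g: "G = 0" "Z + 4*D = 0" using GT by auto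
      from g(1) Gz have "x = 2 \<or> (E = 0 \<and> y = 2 \<and> x < 0)" by simp
      thus "\<zeta> = (2, -(3*c2-2)) \<or> (E = 0 \<and> \<zeta> = (-(3*c2-2), 2))"
      proof
        assume "x = 2"
        with g(2) have "- E*4 + 4*y + 4*(3*c2 - 2 + E) = 0" unfolding Z_def Dv by simp
        hence "y = -(3*c2-2)" by (simp add: algebra_simps)
        thus ?thesis using \<open>x = 2\<close> xy by simp
      next
        assume h: "E = 0 \<and> y = 2 \<and> x < 0"
        with g(2) have "4*x + 4*(3*c2 - 2) = 0" unfolding Z_def Dv by simp
        hence "x = -(3*c2-2)" by (simp add: algebra_simps)
        thus ?thesis using h xy by simp
      qed
    next
      assume "\<zeta> = (2, -(3*c2-2)) \<or> (E = 0 \<and> \<zeta> = (-(3*c2-2), 2))"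
      thus "T = 0"
      proof
        assume "\<zeta> = (2, -(3*c2-2))"
        hence "x = 2" "y = -(3*c2-2)" using xy by auto
        thus "T = 0" unfolding T_def Dv by (simp add: algebra_simps)
      next
        assume "E = 0 \<and> \<zeta> = (-(3*c2-2), 2)"
        hence "E = 0" "x = -(3*c2-2)" "y = 2" using xy by auto
        thus "T = 0" unfolding T_def Dv by (simp add: algebra_simps)
      qed
    qed
    ultimately show ?thesis using t1 t2 E0iff by simp
  qed
  show ?thesis using A0 A1 dz dl dle by auto
qed

end
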